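(* Let $m\in\mathbb{N}$ and $s_1,\dots,s_m\ge1$. Then for every non-negative measurable function $f:H\times X\to[0,\infty)$ and every $\Delta\in X$, $$\int_{-1/3}^{1/3}f(a_{s_1+\cdots+s_m}u_r;\Delta)\,dr\le2\int f(a_{s_m}u_{r_m}\cdots a_{s_1}u_{r_1};\Delta)\,dm_I^{\otimes m}(r_1,\dots,r_m)$$ and $$\int f(a_{s_m}u_{r_m}\cdots a_{s_1}u_{r_1};\Delta)\,dm_I^{\otimes m}(r_1,\dots,r_m)\le\int_{-2}^{2}f(a_{s_1+\cdots+s_m}u_r;\Delta)\,dr.$$
   Context: $Q_0(v)=v_2^2-2v_1v_3$, $H=\{g\in\mathrm{SL}_3(\mathbb{R}):Q_0(gv)=Q_0(v)\ \forall v\}$, $X$ the space of unimodular lattices in $\mathbb{R}^3$. $a_t=\mathrm{diag}(e^t,1,e^{-t})$, $u_r=\begin{pmatrix}1&r&r^2/2\\0&1&r\\0&0&1\end{pmatrix}$. $m_I$ is the uniform Lebesgue probability measure on $I=[-1,1]$. *)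

theory Defs
  imports "HOL-Analysis.Analysis" "HOL-Probability.Probability"
begin

definition Q0 :: "real^3 \<Rightarrow> real" where
  "Q0 v = (v$2)^2 - 2 * (v$1) * (v$3)"

definition SL3 :: "(real^3^3) set" where
  "SL3 = {g. det g = 1}"

definition Hgrp :: "(real^3^3) set" where
  "Hgrp = {g \<in> SL3. \<forall>v. Q0 (g *v v) = Q0 v}"

definition a_mat :: "real \<Rightarrow> real^3^3" where
  "a_mat t = (\<chi> i j. if i = j then (if i = 1 then exp t else if i = 2 then 1 else exp (- t)) else 0)"

definition u_mat :: "real \<Rightarrow> real^3^3" where
  "u_mat r = (\<chi> i j. if i = j then 1
                     else if i = 1 \<and> j = 2 then r
                     else if i = 1 \<and> j = 3 then r^2 / 2
                     else if i = 2 \<and> j = 3 then r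
                     else 0)"

definition lattice_of :: "real^3^3 \<Rightarrow> (real^3) set" where
  "lattice_of g = range (\<lambda>z::int^3. g *v (\<chi> i. real_of_int (z$i)))"

definition Xlat :: "(real^3) set set" where
  "Xlat = lattice_of ` SL3"

text \<open>Borel structure on X = SL3(R)/SL3(Z): the quotient sigma-algebra, i.e. a set of
  lattices is measurable iff its preimage in SL3(R) is Borel.\<close>
definition Xmeas :: "(real^3) set measure" where
  "Xmeas = measure_of Xlat
     {A. A \<subseteq> Xlat \<and> {g \<in> SL3. lattice_of g \<in> A} \<in> sets (borel :: (real^3^3) measure)}
     (\<lambda>_. 0)"

definition Hmeas :: "(real^3^3) measure" where
  "Hmeas = restrict_space borel Hgrp"

text \<open>a_{s_m} u_{r_m} ... a_{s_1} u_{r_1}, with s_i = s (i-1), r_i = r (i-1).\<close>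
fun au_prod :: "(nat \<Rightarrow> real) \<Rightarrow> (nat \<Rightarrow> real) \<Rightarrow> nat \<Rightarrow> real^3^3" where
  "au_prod s r 0 = mat 1"
| "au_prod s r (Suc k) = (a_mat (s k) ** u_mat (r k)) ** au_prod s r k"

definition m_I :: "real measure" where
  "m_I = uniform_measure lborel {-1..1}"

end

theory Submission imports Defs
begin
lemma a_mul: "a_mat t ** a_mat t' = a_mat (t + t')"
  by (simp add: a_mat_def matrix_matrix_mult_def vec_eq_iff forall_3 sum_3 mult_exp_exp)
lemma u_mul: "u_mat r ** u_mat r' = u_mat (r + r')"
  by (simp add: u_mat_def matrix_matrix_mult_def vec_eq_iff forall_3 sum_3 power2_eq_square field_simps)
lemma ua_comm: "u_mat r ** a_mat t = a_mat t ** u_mat (exp (-t) * r)"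
  by (simp add: u_mat_def a_mat_def matrix_matrix_mult_def vec_eq_iff forall_3 sum_3 power2_eq_square field_simps exp_minus)
lemma a_H: "a_mat t \<in> Hgrp"
  by (simp add: Hgrp_def SL3_def Q0_def a_mat_def det_3 matrix_vector_mult_def sum_3 exp_minus field_simps)
lemma u_H: "u_mat t \<in> Hgrp"
  by (simp add: Hgrp_def SL3_def Q0_def u_mat_def det_3 matrix_vector_mult_def sum_3 power2_eq_square field_simps)
lemma H_mul: "g \<in> Hgrp \<Longrightarrow> h \<in> Hgrp \<Longrightarrow> g ** h \<in> Hgrp"
  by (simp add: Hgrp_def SL3_def det_mul matrix_vector_mul_assoc[symmetric])
lemma au_lin: "a_mat t ** u_mat r = a_mat t + r *\<^sub>R (\<chi> i j. if i = 1 \<and> j = 2 then exp t else if i = 2 \<and> j = 3 then 1 else 0)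
   + (r^2/2) *\<^sub>R (\<chi> i j. if i = 1 \<and> j = 3 then exp t else 0)"
  by (simp add: u_mat_def a_mat_def matrix_matrix_mult_def vec_eq_iff forall_3 sum_3)
lemma au_cont: "continuous_on UNIV (\<lambda>r. a_mat t ** u_mat r)"
  unfolding au_lin by (intro continuous_intros) auto
lemma au_meas: "(\<lambda>r. a_mat t ** u_mat r) \<in> borel_measurable borel"
  using au_cont by (rule borel_measurable_continuous_onI)
lemma a0: "a_mat 0 = mat 1" by (simp add: a_mat_def mat_def vec_eq_iff forall_3)
lemma u0: "u_mat 0 = mat 1" by (simp add: u_mat_def mat_def vec_eq_iff forall_3)

definition Tsum :: "(nat \<Rightarrow> real) \<Rightarrow> nat \<Rightarrow> real" where "Tsum s k = (\<Sum>j<k. s j)"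
definition Rsum :: "(nat \<Rightarrow> real) \<Rightarrow> (nat \<Rightarrow> real) \<Rightarrow> nat \<Rightarrow> real" where
  "Rsum s r k = (\<Sum>i<k. exp (- Tsum s i) * r i)"

lemma au_prod_eq: "au_prod s r k = a_mat (Tsum s k) ** u_mat (Rsum s r k)"
proof (induction k)
  case 0
  then show ?case by (simp add: Tsum_def Rsum_def a0 u0 matrix_mul_lid)
next
  case (Suc k)
  have "au_prod s r (Suc k) = (a_mat (s k) ** u_mat (r k)) ** (a_mat (Tsum s k) ** u_mat (Rsum s r k))"
    using Suc by simp
  also have "\<dots> = a_mat (s k) ** ((u_mat (r k) ** a_mat (Tsum s k)) ** u_mat (Rsum s r k))"
    by (simp add: matrix_mul_assoc)
  also have "\<dots> = (a_mat (s k) ** a_mat (Tsum s k)) ** (u_mat (exp (- Tsum s k) * r k) ** u_mat (Rsum s r k))"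
    by (simp add: ua_comm matrix_mul_assoc)
  also have "\<dots> = a_mat (Tsum s (Suc k)) ** u_mat (Rsum s r (Suc k))"
    by (simp add: a_mul u_mul Tsum_def Rsum_def add.commute)
  finally show ?case .
qed

lemma Tsum_ge: assumes "\<forall>i<m. s i \<ge> 1" "i \<le> m" shows "real i \<le> Tsum s i"
proof -
  have "real i = (\<Sum>j<i. (1::real))" by simp
  also have "\<dots> \<le> Tsum s i" unfolding Tsum_def using assms by (intro sum_mono) auto
  finally show ?thesis .
qed

lemma geo_bound: "(\<Sum>i\<in>{1..<m}. (2/5::real)^i) \<le> 2/3"
proof (cases "m \<le> 1")
  case True then show ?thesis by simp
next
  case False
  have e: "{1..<m} = {1..m-1}" using False by auto
  have "(1 - 2/5) * (\<Sum>i=1..m-1. (2/5::real)^i) = (2/5)^1 - (2/5)^Suc (m-1)"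
    using False by (intro sum_gp_multiplied) auto
  moreover have "(0::real) \<le> (2/5)^Suc (m-1)" by simp
  ultimately have "(3/5) * (\<Sum>i=1..m-1. (2/5::real)^i) \<le> 2/5" by simp
  then show ?thesis unfolding e by linarith
qed

lemma exp_m1: "exp (-1::real) \<le> 2/5"
proof -
  have "1 + 1 + 1^2/2 \<le> exp (1::real)" by (rule exp_lower_Taylor_quadratic) simp
  then have "5/2 \<le> exp (1::real)" by simp
  then show ?thesis by (simp add: exp_minus field_simps)
qed

lemma Ybound:
  assumes "\<forall>i<m. s i \<ge> 1" "\<forall>i\<in>{1..<m}. x i \<in> {-1..1}"
  shows "\<bar>\<Sum>i\<in>{1..<m}. exp (- Tsum s i) * x i\<bar> \<le> 2/3"
proof -
  have "\<bar>\<Sum>i\<in>{1..<m}. exp (- Tsum s i) * x i\<bar> \<le> (\<Sum>i\<in>{1..<m}. \<bar>exp (- Tsum s i) * x i\<bar>)"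
    by (rule sum_abs)
  also have "\<dots> \<le> (\<Sum>i\<in>{1..<m}. (2/5::real)^i)"
  proof (intro sum_mono)
    fix i assume i: "i \<in> {1..<m}"
    have "\<bar>exp (- Tsum s i) * x i\<bar> = exp (- Tsum s i) * \<bar>x i\<bar>" by (simp add: abs_mult)
    also have "\<dots> \<le> exp (- Tsum s i) * 1" using assms(2) i by (intro mult_left_mono) (auto simp: abs_le_iff)
    also have "\<dots> \<le> exp (- real i)" using Tsum_ge[OF assms(1), of i] i by simp
    also have "\<dots> = exp (-1) ^ i" by (subst exp_of_nat_mult[symmetric]) simp
    also have "\<dots> \<le> (2/5)^i" using exp_m1 by (intro power_mono) auto
    finally show "\<bar>exp (- Tsum s i) * x i\<bar> \<le> (2/5)^i" .
  qed
  also have "\<dots> \<le> 2/3" by (rule geo_bound)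
  finally show ?thesis .
qed

lemma ennreal_two_half: "2 * ((A::ennreal) / 2) = A"
proof -
  have "2 * (A / 2) = (A * 2) / 2" by (simp add: ennreal_times_divide mult.commute)
  also have "\<dots> = A" by (rule mult_divide_eq_ennreal) auto
  finally show ?thesis .
qed
lemma ennreal_half_le: "(B::ennreal) / 2 \<le> B"
proof -
  have "B / 2 \<le> B / 2 + B / 2" by simp
  also have "\<dots> = 2 * (B / 2)" by (simp add: mult_2)
  finally show ?thesis by (simp add: ennreal_two_half)
qed

theorem lemma6p1:
  fixes m :: nat and s :: "nat \<Rightarrow> real"
    and f :: "(real^3^3) \<times> ((real^3) set) \<Rightarrow> real" and \<Delta> :: "(real^3) set"
  assumes "m \<ge> 1"
    and "\<forall>i<m. s i \<ge> 1"
    and "f \<in> borel_measurable (Hmeas \<Otimes>\<^sub>M Xmeas)"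
    and "\<forall>h\<in>Hgrp. \<forall>L\<in>Xlat. f (h, L) \<ge> 0"
    and "\<Delta> \<in> Xlat"
  shows "(\<integral>\<^sup>+ r\<in>{-1/3..1/3}. ennreal (f (a_mat (\<Sum>i<m. s i) ** u_mat r, \<Delta>)) \<partial>lborel)
           \<le> 2 * (\<integral>\<^sup>+ r. ennreal (f (au_prod s r m, \<Delta>)) \<partial>(PiM {..<m} (\<lambda>_. m_I)))
       \<and> (\<integral>\<^sup>+ r. ennreal (f (au_prod s r m, \<Delta>)) \<partial>(PiM {..<m} (\<lambda>_. m_I)))
           \<le> (\<integral>\<^sup>+ r\<in>{-2..2}. ennreal (f (a_mat (\<Sum>i<m. s i) ** u_mat r, \<Delta>)) \<partial>lborel)"
proof -
  define S where "S = (\<Sum>i<m. s i)"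
  define g where "g x = ennreal (f (a_mat S ** u_mat x, \<Delta>))" for x
  have spX: "space Xmeas = Xlat"
    unfolding Xmeas_def by (rule space_measure_of) auto
  have pm: "(\<lambda>x. (a_mat S ** u_mat x, \<Delta>)) \<in> borel \<rightarrow>\<^sub>M Hmeas \<Otimes>\<^sub>M Xmeas"
  proof (rule measurable_Pair)
    show "(\<lambda>x. a_mat S ** u_mat x) \<in> borel \<rightarrow>\<^sub>M Hmeas"
      unfolding Hmeas_def
      by (rule measurable_restrict_space2) (auto intro: H_mul a_H u_H au_meas)
    show "(\<lambda>x. \<Delta>) \<in> borel \<rightarrow>\<^sub>M Xmeas"
      using assms(5) spX by (intro measurable_const) auto
  qed
  have gm[measurable]: "g \<in> borel_measurable borel"
  proof -
    have "(\<lambda>x. f (a_mat S ** u_mat x, \<Delta>)) \<in> borel_measurable borel"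
      using measurable_compose[OF pm assms(3)] by simp
    then show ?thesis unfolding g_def by measurable
  qed
  define A where "A = (\<integral>\<^sup>+ r\<in>{-1/3..1/3}. g r \<partial>lborel)"
  define B where "B = (\<integral>\<^sup>+ r\<in>{-2..2}. g r \<partial>lborel)"
  define J where "J c = (\<integral>\<^sup>+ z. g z * indicator {c-1..c+1} z \<partial>lborel)" for c
  have JA: "A \<le> J c" if "\<bar>c\<bar> \<le> 2/3" for c
    unfolding A_def J_def using that
    by (intro nn_integral_mono) (auto split: split_indicator)
  have JB: "J c \<le> B" if "\<bar>c\<bar> \<le> 2/3" for c
    unfolding B_def J_def using that
    by (intro nn_integral_mono) (auto split: split_indicator)
  have pI: "prob_space m_I" unfolding m_I_def by (rule prob_space_uniform_measure) auto
  have inner: "(\<integral>\<^sup>+ y. g (y + c) \<partial>m_I) = J c / 2" for c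
  proof -
    have "(\<integral>\<^sup>+ y. g (y + c) \<partial>m_I) = (\<integral>\<^sup>+ y. g (y + c) * indicator {-1..1} y \<partial>lborel) / 2"
      unfolding m_I_def by (subst nn_integral_uniform_measure) auto
    also have "(\<integral>\<^sup>+ y. g (y + c) * indicator {-1..1} y \<partial>lborel) = J c"
      unfolding J_def
      by (subst nn_integral_real_affine[where c=1 and t=c])
         (auto intro!: nn_integral_cong simp: add.commute split: split_indicator)
    finally show ?thesis .
  qed
  define I1 where "I1 = {1..<m}"
  have ins: "{..<m} = insert 0 I1" using assms(1) unfolding I1_def by auto
  have fI1: "finite I1" "0 \<notin> I1" unfolding I1_def by auto
  define Y where "Y x = (\<Sum>i\<in>I1. exp (- Tsum s i) * x i)" for x :: "nat \<Rightarrow> real"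
  have RY: "Rsum s (x(0:=y)) m = y + Y x" for x y
  proof -
    have "Rsum s (x(0:=y)) m = (\<Sum>i\<in>insert 0 I1. exp (- Tsum s i) * (x(0:=y)) i)"
      unfolding Rsum_def ins ..
    also have "\<dots> = y + Y x" using fI1 unfolding Y_def
      by (auto simp: Tsum_def intro!: sum.cong)
    finally show ?thesis .
  qed
  have TS: "Tsum s m = S" unfolding Tsum_def S_def ..
  have sI: "sets m_I = sets borel" by (simp add: m_I_def)
  interpret PS: product_sigma_finite "\<lambda>_. m_I"
    unfolding product_sigma_finite_def using pI prob_space_imp_sigma_finite by auto
  have Rm: "(\<lambda>r. Rsum s r m) \<in> borel_measurable (PiM (insert 0 I1) (\<lambda>_. m_I))"
    unfolding Rsum_def ins[symmetric]
  proof (intro borel_measurable_sum borel_measurable_times borel_measurable_const)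
    fix i assume "i \<in> {..<m}"
    then have "(\<lambda>x. x i) \<in> PiM {..<m} (\<lambda>_. m_I) \<rightarrow>\<^sub>M m_I"
      by (rule measurable_component_singleton)
    then show "(\<lambda>x. x i) \<in> borel_measurable (PiM {..<m} (\<lambda>_. m_I))"
      using sI by (simp cong: measurable_cong_sets)
  qed
  have prodeq: "(\<integral>\<^sup>+ r. ennreal (f (au_prod s r m, \<Delta>)) \<partial>(PiM {..<m} (\<lambda>_. m_I)))
      = (\<integral>\<^sup>+ x. J (Y x) / 2 \<partial>PiM I1 (\<lambda>_. m_I))"
  proof -
    have "(\<integral>\<^sup>+ r. ennreal (f (au_prod s r m, \<Delta>)) \<partial>(PiM {..<m} (\<lambda>_. m_I)))
        = (\<integral>\<^sup>+ r. g (Rsum s r m) \<partial>PiM (insert 0 I1) (\<lambda>_. m_I))"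
      by (simp add: ins[symmetric] au_prod_eq g_def TS)
    also have "\<dots> = (\<integral>\<^sup>+ x. (\<integral>\<^sup>+ y. g (Rsum s (x(0:=y)) m) \<partial>m_I) \<partial>PiM I1 (\<lambda>_. m_I))"
      by (rule PS.product_nn_integral_insert[OF fI1]) (rule measurable_compose[OF Rm gm])
    also have "\<dots> = (\<integral>\<^sup>+ x. J (Y x) / 2 \<partial>PiM I1 (\<lambda>_. m_I))"
      by (simp add: RY inner)
    finally show ?thesis .
  qed
  have pP: "prob_space (PiM I1 (\<lambda>_. m_I))"
    by (rule prob_space_PiM) (rule pI)
  have AEb: "AE x in PiM I1 (\<lambda>_. m_I). \<bar>Y x\<bar> \<le> 2/3"
  proof -
    have "AE x in m_I. x \<in> {-1..1}"
      unfolding m_I_def by (rule AE_uniform_measureI) auto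
    then have "\<forall>i\<in>I1. AE x in PiM I1 (\<lambda>_. m_I). x i \<in> {-1..1}"
      using pI by (auto intro: AE_PiM_component)
    then have "AE x in PiM I1 (\<lambda>_. m_I). \<forall>i\<in>I1. x i \<in> {-1..1}"
      using fI1 by (simp add: AE_finite_all)
    moreover have "AE x in PiM I1 (\<lambda>_. m_I). (\<forall>i\<in>I1. x i \<in> {-1..1}) \<longrightarrow> \<bar>Y x\<bar> \<le> 2/3"
      using Ybound[OF assms(2)] unfolding Y_def I1_def by (intro AE_I2 impI) blast
    ultimately show ?thesis by (rule AE_mp)
  qed
  have sp1: "emeasure (PiM I1 (\<lambda>_. m_I)) (space (PiM I1 (\<lambda>_. m_I))) = 1"
    using pP by (rule prob_space.emeasure_space_1)
  have low: "A / 2 \<le> (\<integral>\<^sup>+ x. J (Y x) / 2 \<partial>PiM I1 (\<lambda>_. m_I))"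
  proof -
    have "A / 2 = (\<integral>\<^sup>+ x. A / 2 \<partial>PiM I1 (\<lambda>_. m_I))" using sp1 by simp
    also have "\<dots> \<le> (\<integral>\<^sup>+ x. J (Y x) / 2 \<partial>PiM I1 (\<lambda>_. m_I))"
      by (rule nn_integral_mono_AE) (use AEb in \<open>auto elim!: AE_mp intro!: divide_right_mono_ennreal JA\<close>)
    finally show ?thesis .
  qed
  have up: "(\<integral>\<^sup>+ x. J (Y x) / 2 \<partial>PiM I1 (\<lambda>_. m_I)) \<le> B"
  proof -
    have "(\<integral>\<^sup>+ x. J (Y x) / 2 \<partial>PiM I1 (\<lambda>_. m_I)) \<le> (\<integral>\<^sup>+ x. B / 2 \<partial>PiM I1 (\<lambda>_. m_I))"
      by (rule nn_integral_mono_AE) (use AEb in \<open>auto elim!: AE_mp intro!: divide_right_mono_ennreal JB\<close>)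
    also have "\<dots> = B / 2" using sp1 by simp
    also have "\<dots> \<le> B" by (rule ennreal_half_le)
    finally show ?thesis .
  qed
  have "A \<le> 2 * (\<integral>\<^sup>+ x. J (Y x) / 2 \<partial>PiM I1 (\<lambda>_. m_I))"
    using mult_left_mono[OF low, of 2] by (simp add: ennreal_two_half)
  then show ?thesis using up prodeq unfolding A_def B_def g_def S_def by simp
qed

end
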